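(* Let $a_1,a_2,a_3\in\mathbb C$ be distinct and non-collinear, $\{i,j,k\}=\{1,2,3\}$, let $b$ be a point in the interior of the triangle $\Delta_Q$, and let $l_b$ be the straight line through $b$ parallel to the side $\overline{a_ja_k}$. Then there exists a unique point $b'\in l_b$ such that $\int_{a_j}^{a_k}\sqrt{\frac{b'-t}{(t-a_1)(t-a_2)(t-a_3)}}\,dt\in\mathbb R$, and moreover $b'\in\Delta_Q\cap l_b$.
   Context: $\Delta_Q$ is the convex hull of $a_1,a_2,a_3$. The integral is along the straight segment from $a_j$ to $a_k$ with a continuous branch of the square root (the reality condition does not depend on the branch). *)

theory Defs
  imports "HOL-Analysis.Analysis"
begin

definition radicand :: "(nat \<Rightarrow> complex) \<Rightarrow> complex \<Rightarrow> complex \<Rightarrow> complex" where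
  "radicand a c t = (c - t) / ((t - a 1) * (t - a 2) * (t - a 3))"

text \<open>The integral of sqrt(radicand) along the straight segment from a j to a k,
  parametrised by t = a j + s (a k - a j), s in [0,1], with a continuous branch g of the
  square root on the open segment, is a real number.\<close>
definition segment_integral_real ::
  "(nat \<Rightarrow> complex) \<Rightarrow> nat \<Rightarrow> nat \<Rightarrow> complex \<Rightarrow> bool" where
  "segment_integral_real a j k c \<longleftrightarrow>
     (\<exists>g I. continuous_on {0<..<1} g \<and>
        (\<forall>s\<in>{0<..<1::real}. (g s)\<^sup>2 = radicand a c (a j + of_real s * (a k - a j))) \<and>
        ((\<lambda>s. g s * (a k - a j)) has_integral I) {0..1} \<and>
        I \<in> \<real>)"

end

theory Submission
  imports Defs "HOL-Analysis.Analysis"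
begin


lemma csqrt_Im: "Im z = 2 * Re (csqrt z) * Im (csqrt z)"
proof -
  have "Im z = Im ((csqrt z)^2)" by simp
  also have "\<dots> = 2 * Re (csqrt z) * Im (csqrt z)" by (simp add: power2_eq_square)
  finally show ?thesis .
qed

lemma csqrt_Re: "Re z = (Re (csqrt z))^2 - (Im (csqrt z))^2"
proof -
  have "Re z = Re ((csqrt z)^2)" by simp
  also have "\<dots> = (Re (csqrt z))^2 - (Im (csqrt z))^2" by (simp add: power2_eq_square)
  finally show ?thesis .
qed

lemma csqrt_Re_pos: assumes "Im z \<noteq> 0" shows "Re (csqrt z) > 0"
proof (rule ccontr)
  assume "\<not> Re (csqrt z) > 0"
  hence "Re (csqrt z) = 0" using csqrt_principal[of z] by linarith
  hence "Im z = 0" using csqrt_Im[of z] by (simp only: mult_zero_right mult_zero_left)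
  thus False using assms by (simp only: not_True_eq_False)
qed

lemma csqrt_Im_sign: assumes "Im z \<noteq> 0" shows "Im z * Im (csqrt z) > 0"
proof -
  have "Im z * Im (csqrt z) = 2 * Re (csqrt z) * (Im (csqrt z))^2"
    using csqrt_Im[of z] by (simp add: power2_eq_square)
  moreover have "Im (csqrt z) \<noteq> 0"
  proof
    assume "Im (csqrt z) = 0"
    hence "Im z = 0" using csqrt_Im[of z] by (simp only: mult_zero_right mult_zero_left)
    thus False using assms by (simp only: not_True_eq_False)
  qed
  ultimately show ?thesis using csqrt_Re_pos[OF assms] by simp
qed

lemma csqrt_quot_sign:
  assumes "Im z1 * Im z2 > 0"
  shows "Im (csqrt z1 * cnj (csqrt z2)) * Im (z1 * cnj z2) > 0 \<or> (Im (csqrt z1 * cnj (csqrt z2)) = 0 \<and> Im (z1 * cnj z2) = 0)"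
proof -
  define w1 where "w1 = csqrt z1"
  define w2 where "w2 = csqrt z2"
  have n1: "Im z1 \<noteq> 0" and n2: "Im z2 \<noteq> 0" using assms by auto
  have r1: "Re w1 > 0" and r2: "Re w2 > 0" using csqrt_Re_pos n1 n2 w1_def w2_def by auto
  have s1: "Im z1 * Im w1 > 0" and s2: "Im z2 * Im w2 > 0" using csqrt_Im_sign n1 n2 w1_def w2_def by auto
  have "Im w1 * Im w2 > 0"
  proof -
    have "(Im z1 * Im w1) * (Im z2 * Im w2) > 0" using s1 s2 by simp
    hence "(Im z1 * Im z2) * (Im w1 * Im w2) > 0" by (simp add: algebra_simps)
    thus ?thesis using assms zero_less_mult_pos by blast
  qed
  define v where "v = w1 * cnj w2"
  have rv: "Re v > 0" using r1 r2 \<open>Im w1 * Im w2 > 0\<close> by (simp add: v_def add_pos_pos)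
  have "v^2 = w1^2 * cnj (w2^2)" by (simp add: v_def power_mult_distrib)
  hence zv: "z1 * cnj z2 = v^2" by (simp add: w1_def w2_def)
  have "Im (v^2) = 2 * Re v * Im v" by (simp add: power2_eq_square)
  hence h2: "Im (z1 * cnj z2) = 2 * Re v * Im v" unfolding zv .
  have "Im v * (2 * Re v * Im v) > 0 \<or> (Im v = 0 \<and> 2 * Re v * Im v = 0)"
  proof (cases "Im v = 0")
    case False
    hence "(Im v)^2 > 0" by simp
    hence "2 * Re v * (Im v)^2 > 0" using rv by simp
    thus ?thesis by (simp add: power2_eq_square mult.commute mult.left_commute)
  qed simp
  thus ?thesis unfolding h2 w1_def[symmetric] w2_def[symmetric] v_def[symmetric] .
qed


lemma csqrt_mono:
  assumes "Im z = Im z'" "Re z < Re z'" "Im z \<noteq> 0"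
  shows "Re (csqrt z) < Re (csqrt z')" "Im z * (Im (csqrt z') - Im (csqrt z)) < 0"
proof -
  define p where "p = Re (csqrt z)"
  define q where "q = Im (csqrt z)"
  define p' where "p' = Re (csqrt z')"
  define q' where "q' = Im (csqrt z')"
  have pp: "p > 0" "p' > 0" using csqrt_Re_pos assms p_def p'_def by auto
  have e1: "Im z = 2*p*q" "Im z' = 2*p'*q'" using csqrt_Im p_def q_def p'_def q'_def by auto
  have e2: "Re z = p^2 - q^2" "Re z' = p'^2 - q'^2" using csqrt_Re p_def q_def p'_def q'_def by auto
  have pq: "p*q = p'*q'" using e1 assms(1) by simp
  show lt: "p < p'"
  proof (rule ccontr)
    assume "\<not> p < p'"
    hence le: "p' \<le> p" by simp
    have "(p*q)^2 = (p'*q')^2" using pq by simp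
    hence "p^2*q^2 = p'^2*q'^2" by (simp add: power_mult_distrib)
    moreover have "p'^2 \<le> p^2" using le pp by (simp add: power_mono)
    ultimately have "q^2 \<le> q'^2"
    proof -
      have "p'^2 * q^2 \<le> p^2 * q^2" using \<open>p'^2 \<le> p^2\<close> by (rule mult_right_mono) simp
      hence "p'^2 * q^2 \<le> p'^2 * q'^2" using \<open>p^2*q^2 = p'^2*q'^2\<close> by simp
      moreover have "p'^2 > 0" using pp by simp
      ultimately show ?thesis by (simp add: mult_le_cancel_left_pos)
    qed
    hence "Re z' \<le> Re z" using e2 \<open>p'^2 \<le> p^2\<close> by linarith
    thus False using assms(2) by simp
  qed
  have "q' = p*q/p'" using pq pp by (simp add: field_simps)
  hence "q' - q = q*(p - p')/p'" using pp by (simp add: field_simps)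
  hence "Im z * (q' - q) = 2*p*q^2*(p-p')/p'" using e1 by (simp add: power2_eq_square)
  moreover have "q \<noteq> 0" using e1 assms(3) by auto
  hence "2*p*q^2*(p-p') < 0" using pp lt by (simp add: mult_pos_neg)
  hence "2*p*q^2*(p-p')/p' < 0" using pp by (simp add: divide_neg_pos)
  ultimately show "Im z * (Im (csqrt z') - Im (csqrt z)) < 0" unfolding q_def q'_def by linarith
qed




definition rho :: "complex \<Rightarrow> real \<Rightarrow> real" where
  "rho \<alpha> s = 1 / (cmod (\<alpha> - of_real s) * sqrt (s * (1 - s)))"

definition QQ :: "complex \<Rightarrow> complex \<Rightarrow> real \<Rightarrow> complex" where
  "QQ \<alpha> \<gamma> s = of_real (rho \<alpha> s) * (csqrt (\<gamma> - of_real s) * cnj (csqrt (\<alpha> - of_real s)))"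

lemma rho_pos: assumes "Im \<alpha> \<noteq> 0" "0 < s" "s < 1" shows "rho \<alpha> s > 0"
proof -
  have "\<alpha> - of_real s \<noteq> 0" using assms(1) by (auto simp: complex_eq_iff)
  hence "cmod (\<alpha> - of_real s) > 0" by simp
  moreover have "s * (1 - s) > 0" using assms by simp
  ultimately show ?thesis unfolding rho_def by simp
qed

lemma Im_QQ: "Im (QQ \<alpha> \<gamma> s) = rho \<alpha> s * (Im (csqrt (\<gamma> - of_real s)) * Re (csqrt (\<alpha> - of_real s))
    - Re (csqrt (\<gamma> - of_real s)) * Im (csqrt (\<alpha> - of_real s)))"
  unfolding QQ_def by simp

lemma Im_of_real_mult: "Im (of_real r * w) = r * Im w" by simp

lemma Im_QQ': "Im (QQ \<alpha> \<gamma> s) = rho \<alpha> s * Im (csqrt (\<gamma> - of_real s) * cnj (csqrt (\<alpha> - of_real s)))"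
  unfolding QQ_def by (rule Im_of_real_mult)

lemma sign_transfer: fixes A B X :: real assumes "A * B > 0" "A * X < 0" shows "B * X < 0"
  using assms by (auto simp: zero_less_mult_iff mult_less_0_iff)

lemma QQ_mono:
  assumes "Im \<alpha> \<noteq> 0" "0 < s" "s < 1" "Im \<gamma>1 = Im \<gamma>2" "Im \<gamma>1 * Im \<alpha> > 0" "Re \<gamma>1 < Re \<gamma>2"
  shows "Im \<alpha> * Im (QQ \<alpha> \<gamma>2 s) < Im \<alpha> * Im (QQ \<alpha> \<gamma>1 s)"
proof -
  define z where "z = \<gamma>1 - of_real s"
  define z' where "z' = \<gamma>2 - of_real s"
  define z2 where "z2 = \<alpha> - of_real s"
  have iz: "Im z = Im z'" "Re z < Re z'" "Im z \<noteq> 0" using assms by (auto simp: z_def z'_def)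
  have m1: "Re (csqrt z) < Re (csqrt z')" and m2: "Im z * (Im (csqrt z') - Im (csqrt z)) < 0"
    using csqrt_mono[OF iz] by auto
  have "Im z * Im \<alpha> > 0" using assms by (simp add: z_def)
  hence m3: "Im \<alpha> * (Im (csqrt z') - Im (csqrt z)) < 0" using sign_transfer m2 by blast
  have iz2: "Im z2 = Im \<alpha>" by (simp add: z2_def)
  have r2: "Re (csqrt z2) > 0" using csqrt_Re_pos[of z2] iz2 assms(1) by simp
  have i2: "Im \<alpha> * Im (csqrt z2) > 0" using csqrt_Im_sign[of z2] iz2 assms(1) by simp
  have "Im \<alpha> * (Im (csqrt z') - Im (csqrt z)) * Re (csqrt z2) < 0"
    using m3 r2 by (simp add: mult_neg_pos)
  moreover have "(Re (csqrt z') - Re (csqrt z)) * (Im \<alpha> * Im (csqrt z2)) > 0"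
    using m1 i2 by simp
  ultimately have "Im \<alpha> * (Im (csqrt z') * Re (csqrt z2) - Re (csqrt z') * Im (csqrt z2))
      < Im \<alpha> * (Im (csqrt z) * Re (csqrt z2) - Re (csqrt z) * Im (csqrt z2))"
    by (simp add: algebra_simps)
  hence "rho \<alpha> s * (Im \<alpha> * (Im (csqrt z') * Re (csqrt z2) - Re (csqrt z') * Im (csqrt z2)))
      < rho \<alpha> s * (Im \<alpha> * (Im (csqrt z) * Re (csqrt z2) - Re (csqrt z) * Im (csqrt z2)))"
    using rho_pos[OF assms(1-3)] by simp
  thus ?thesis unfolding Im_QQ z_def z'_def z2_def by (simp add: algebra_simps)
qed

lemma QQ_left:
  assumes "Im \<alpha> \<noteq> 0" "0 < s" "s < 1" "0 < \<mu>" "\<mu> < 1"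
  shows "Im \<alpha> * Im (QQ \<alpha> (of_real \<mu> * \<alpha>) s) > 0"
proof -
  define z1 where "z1 = of_real \<mu> * \<alpha> - of_real s"
  define z2 where "z2 = \<alpha> - of_real s"
  define X where "X = Im (csqrt z1 * cnj (csqrt z2))"
  have "Im z1 * Im z2 = \<mu> * (Im \<alpha> * Im \<alpha>)" by (simp add: z1_def z2_def)
  also have "\<dots> > 0"
  proof -
    have "Im \<alpha> * Im \<alpha> > 0" using assms(1) not_real_square_gt_zero by blast
    thus ?thesis using assms(4) by (rule mult_pos_pos[rotated])
  qed
  finally have d: "Im (csqrt z1 * cnj (csqrt z2)) * Im (z1 * cnj z2) > 0 \<or>
     (Im (csqrt z1 * cnj (csqrt z2)) = 0 \<and> Im (z1 * cnj z2) = 0)"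
    using csqrt_quot_sign by blast
  have e: "Im (z1 * cnj z2) = s * (1 - \<mu>) * Im \<alpha>" by (simp add: z1_def z2_def algebra_simps)
  have sp: "s * (1 - \<mu>) > 0" using assms by simp
  have "Im (csqrt z1 * cnj (csqrt z2)) * Im \<alpha> > 0"
  proof -
    have "Im (z1 * cnj z2) \<noteq> 0" unfolding e using sp assms by simp
    hence "Im (csqrt z1 * cnj (csqrt z2)) * (s * (1 - \<mu>) * Im \<alpha>) > 0" using d e by auto
    hence "(s * (1 - \<mu>)) * (X * Im \<alpha>) > 0" unfolding X_def[symmetric] by (simp add: algebra_simps)
    thus ?thesis using sp zero_less_mult_pos unfolding X_def[symmetric] by blast
  qed
  hence "rho \<alpha> s * (X * Im \<alpha>) > 0" using rho_pos[OF assms(1-3)] unfolding X_def[symmetric] by simp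
  thus ?thesis unfolding Im_QQ' z1_def[symmetric] z2_def[symmetric] X_def[symmetric] by (simp add: algebra_simps)
qed

lemma QQ_right:
  assumes "Im \<alpha> \<noteq> 0" "0 < s" "s < 1" "0 < \<mu>" "\<mu> < 1"
  shows "Im \<alpha> * Im (QQ \<alpha> (of_real \<mu> * \<alpha> + of_real (1 - \<mu>)) s) < 0"
proof -
  define z1 where "z1 = of_real \<mu> * \<alpha> + of_real (1 - \<mu>) - of_real s"
  define z2 where "z2 = \<alpha> - of_real s"
  define X where "X = Im (csqrt z1 * cnj (csqrt z2))"
  have "Im z1 * Im z2 = \<mu> * (Im \<alpha> * Im \<alpha>)" by (simp add: z1_def z2_def)
  also have "\<dots> > 0"
  proof -
    have "Im \<alpha> * Im \<alpha> > 0" using assms(1) not_real_square_gt_zero by blast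
    thus ?thesis using assms(4) by (rule mult_pos_pos[rotated])
  qed
  finally have d: "Im (csqrt z1 * cnj (csqrt z2)) * Im (z1 * cnj z2) > 0 \<or>
     (Im (csqrt z1 * cnj (csqrt z2)) = 0 \<and> Im (z1 * cnj z2) = 0)"
    using csqrt_quot_sign by blast
  have e: "Im (z1 * cnj z2) = - ((1 - s) * (1 - \<mu>) * Im \<alpha>)" by (simp add: z1_def z2_def algebra_simps)
  have sp: "(1 - s) * (1 - \<mu>) > 0" using assms by simp
  have "Im (csqrt z1 * cnj (csqrt z2)) * Im \<alpha> < 0"
  proof -
    have "Im (z1 * cnj z2) \<noteq> 0" unfolding e using sp assms by simp
    hence "Im (csqrt z1 * cnj (csqrt z2)) * (- ((1 - s) * (1 - \<mu>) * Im \<alpha>)) > 0" using d e by auto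
    hence "((1 - s) * (1 - \<mu>)) * (X * Im \<alpha>) < 0" unfolding X_def[symmetric] by (simp add: algebra_simps)
    thus ?thesis using sp unfolding X_def[symmetric] by (metis mult_less_0_iff not_less_iff_gr_or_eq)
  qed
  hence "rho \<alpha> s * (X * Im \<alpha>) < 0" using rho_pos[OF assms(1-3)] unfolding X_def[symmetric]
    by (simp add: mult_pos_neg)
  thus ?thesis unfolding Im_QQ' z1_def[symmetric] z2_def[symmetric] X_def[symmetric] by (simp add: algebra_simps)
qed




lemma isCont_csqrt_shift:
  assumes "Im \<gamma> \<noteq> 0"
  shows "isCont (\<lambda>s::real. csqrt (\<gamma> - of_real s)) s"
proof -
  have "isCont (csqrt \<circ> (\<lambda>s::real. \<gamma> - of_real s)) s"
  proof (rule continuous_at_compose)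
    show "isCont (\<lambda>s::real. \<gamma> - of_real s) s" by (intro continuous_intros)
    have "\<gamma> - of_real s \<notin> \<real>\<^sub>\<le>\<^sub>0" using assms by (simp add: complex_nonpos_Reals_iff)
    thus "isCont csqrt (\<gamma> - of_real s)" by (rule continuous_at_csqrt)
  qed
  thus ?thesis by (simp add: o_def)
qed

lemma QQ_cont:
  assumes "Im \<alpha> \<noteq> 0" "Im \<gamma> \<noteq> 0"
  shows "continuous_on {0<..<1} (QQ \<alpha> \<gamma>)"
proof (rule continuous_at_imp_continuous_on, rule ballI)
  fix s :: real assume s: "s \<in> {0<..<1}"
  have nz: "cmod (\<alpha> - of_real s) * sqrt (s * (1 - s)) \<noteq> 0"
    using s assms(1) by (auto simp: complex_eq_iff)
  have c1: "isCont (\<lambda>s. rho \<alpha> s) s" unfolding rho_def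
    using nz by (intro continuous_intros) auto
  have c2: "isCont (\<lambda>s::real. csqrt (\<gamma> - of_real s)) s" using isCont_csqrt_shift assms(2) .
  have c3: "isCont (\<lambda>s::real. csqrt (\<alpha> - of_real s)) s" using isCont_csqrt_shift assms(1) .
  have c4: "isCont (\<lambda>s::real. cnj (csqrt (\<alpha> - of_real s))) s" using c3 by (intro continuous_intros)
  show "isCont (QQ \<alpha> \<gamma>) s" unfolding QQ_def[abs_def]
    using c1 c2 c3 c4 by (intro continuous_intros) auto
qed

lemma QQ_alg:
  fixes w1 w2 :: complex and s :: real
  assumes "w2 \<noteq> 0" "0 < s" "s < 1"
  shows "(of_real (1 / (cmod (w2^2) * sqrt (s * (1 - s)))) * (w1 * cnj w2))^2
       = w1^2 / (w2^2 * (of_real s * (1 - of_real s)))"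
proof -
  have q: "(sqrt (s * (1 - s)))^2 = s * (1 - s)" using assms by simp
  have n: "of_real ((cmod w2)^2) = w2 * cnj w2" by (rule complex_norm_square)
  have "(of_real (1 / (cmod (w2^2) * sqrt (s * (1 - s)))) * (w1 * cnj w2))^2
      = w1^2 * cnj w2^2 / (of_real ((cmod w2)^2) ^2 * of_real ((sqrt (s * (1 - s)))^2))"
    by (simp add: norm_power power_mult_distrib power_divide)
  also have "\<dots> = w1^2 * cnj w2^2 / ((w2 * cnj w2)^2 * (of_real s * (1 - of_real s)))"
    unfolding n q by simp
  also have "\<dots> = w1^2 / (w2^2 * (of_real s * (1 - of_real s)))"
    using assms by (simp add: field_simps power2_eq_square)
  finally show ?thesis .
qed

lemma QQ_sq:
  assumes "Im \<alpha> \<noteq> 0" "0 < s" "s < 1"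
  shows "(QQ \<alpha> \<gamma> s)^2 = (\<gamma> - of_real s) / ((\<alpha> - of_real s) * (of_real s * (1 - of_real s)))"
proof -
  define w1 where "w1 = csqrt (\<gamma> - of_real s)"
  define w2 where "w2 = csqrt (\<alpha> - of_real s)"
  have e1: "w1^2 = \<gamma> - of_real s" and e2: "w2^2 = \<alpha> - of_real s" unfolding w1_def w2_def by simp_all
  have "\<alpha> - of_real s \<noteq> 0" using assms(1) by (auto simp: complex_eq_iff)
  hence nz: "w2 \<noteq> 0" using e2 by auto
  have "QQ \<alpha> \<gamma> s = of_real (1 / (cmod (w2^2) * sqrt (s * (1 - s)))) * (w1 * cnj w2)"
    unfolding QQ_def rho_def e2 w1_def[symmetric] w2_def[symmetric] ..
  thus ?thesis using QQ_alg[OF nz assms(2,3), of w1] unfolding e1 e2 by simp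
qed

lemma QQ_nonzero:
  assumes "Im \<alpha> \<noteq> 0" "Im \<gamma> \<noteq> 0" "0 < s" "s < 1"
  shows "QQ \<alpha> \<gamma> s \<noteq> 0"
proof
  assume "QQ \<alpha> \<gamma> s = 0"
  hence "(\<gamma> - of_real s) / ((\<alpha> - of_real s) * (of_real s * (1 - of_real s))) = 0"
    using QQ_sq[OF assms(1,3,4), of \<gamma>] by simp
  moreover have "\<gamma> - of_real s \<noteq> 0" "\<alpha> - of_real s \<noteq> 0" using assms(1,2) by (auto simp: complex_eq_iff)
  moreover have "(of_real s * (1 - of_real s) :: complex) \<noteq> 0" using assms(3,4)
    by (metis mult_eq_0_iff of_real_1 of_real_diff of_real_eq_0_iff less_irrefl eq_iff_diff_eq_0)
  ultimately show False by simp
qed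

lemma QQ_norm_alg:
  fixes w1 w2 :: complex and s :: real
  assumes "w2 \<noteq> 0" "0 < s" "s < 1"
  shows "norm (of_real (1 / (cmod (w2^2) * sqrt (s * (1 - s)))) * (w1 * cnj w2))
       = norm w1 / (norm w2 * sqrt (s * (1 - s)))"
proof -
  have p: "norm w2 > 0" "sqrt (s * (1 - s)) > 0" using assms by auto
  have g: "norm (of_real r * (w1 * cnj w2)) = \<bar>r\<bar> * (norm w1 * norm w2)" for r
    by (simp add: norm_mult)
  have "\<bar>1 / (cmod (w2^2) * sqrt (s * (1 - s)))\<bar> = 1 / (norm w2 * norm w2 * sqrt (s * (1 - s)))"
    using p by (simp add: norm_power power2_eq_square norm_mult)
  hence "norm (of_real (1 / (cmod (w2^2) * sqrt (s * (1 - s)))) * (w1 * cnj w2))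
     = (1 / (norm w2 * norm w2 * sqrt (s * (1 - s)))) * (norm w1 * norm w2)"
    unfolding g by simp
  also have "\<dots> = norm w1 / (norm w2 * sqrt (s * (1 - s)))" using p by (simp add: field_simps)
  finally show ?thesis .
qed

lemma QQ_norm:
  assumes "Im \<alpha> \<noteq> 0" "0 < s" "s < 1"
  shows "norm (QQ \<alpha> \<gamma> s) = sqrt (cmod (\<gamma> - of_real s)) / (sqrt (cmod (\<alpha> - of_real s)) * sqrt (s * (1 - s)))"
proof -
  define w1 where "w1 = csqrt (\<gamma> - of_real s)"
  define w2 where "w2 = csqrt (\<alpha> - of_real s)"
  have e2: "w2^2 = \<alpha> - of_real s" unfolding w2_def by simp
  have "\<alpha> - of_real s \<noteq> 0" using assms(1) by (auto simp: complex_eq_iff)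
  hence nz: "w2 \<noteq> 0" using e2 by auto
  have "QQ \<alpha> \<gamma> s = of_real (1 / (cmod (w2^2) * sqrt (s * (1 - s)))) * (w1 * cnj w2)"
    unfolding QQ_def rho_def e2 w1_def[symmetric] w2_def[symmetric] ..
  hence "norm (QQ \<alpha> \<gamma> s) = norm w1 / (norm w2 * sqrt (s * (1 - s)))"
    using QQ_norm_alg[OF nz assms(2,3)] by simp
  thus ?thesis unfolding w1_def w2_def norm_csqrt .
qed

definition J0 :: "real \<Rightarrow> real" where "J0 s = 1 / sqrt (s * (1 - s))"

lemma QQ_bound:
  assumes "Im \<alpha> \<noteq> 0" "0 < s" "s < 1"
  shows "norm (QQ \<alpha> \<gamma> s) \<le> sqrt (cmod \<gamma> + 1) / sqrt \<bar>Im \<alpha>\<bar> * J0 s"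
proof -
  have a: "sqrt (cmod (\<gamma> - of_real s)) \<le> sqrt (cmod \<gamma> + 1)"
  proof -
    have "cmod (\<gamma> - of_real s) \<le> cmod \<gamma> + cmod (of_real s :: complex)" by (rule norm_triangle_ineq4)
    also have "\<dots> \<le> cmod \<gamma> + 1" using assms by simp
    finally show ?thesis by simp
  qed
  have b: "sqrt \<bar>Im \<alpha>\<bar> \<le> sqrt (cmod (\<alpha> - of_real s))"
    using abs_Im_le_cmod[of "\<alpha> - of_real s"] by simp
  have bp: "sqrt \<bar>Im \<alpha>\<bar> > 0" using assms(1) by simp
  have sp: "sqrt (s * (1 - s)) > 0" using assms by simp
  have "sqrt (cmod (\<gamma> - of_real s)) / (sqrt (cmod (\<alpha> - of_real s)) * sqrt (s * (1 - s)))
      \<le> sqrt (cmod \<gamma> + 1) / (sqrt \<bar>Im \<alpha>\<bar> * sqrt (s * (1 - s)))"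
    using a b bp sp by (intro frac_le mult_pos_pos mult_right_mono) auto
  thus ?thesis unfolding QQ_norm[OF assms] J0_def by simp
qed

lemma csqrt_lip:
  assumes "Im z1 \<noteq> 0" "cmod z1 \<le> K" 
  shows "cmod (csqrt z1 - csqrt z2) \<le> 2 * sqrt K / \<bar>Im z1\<bar> * cmod (z1 - z2)"
proof -
  define w1 where "w1 = csqrt z1"
  define w2 where "w2 = csqrt z2"
  have e1: "w1^2 = z1" and e2: "w2^2 = z2" unfolding w1_def w2_def by simp_all
  have r1: "Re w1 > 0" unfolding w1_def using csqrt_Re_pos assms(1) .
  have r2: "Re w2 \<ge> 0" unfolding w2_def using csqrt_principal[of z2] by linarith
  have im: "Im z1 = 2 * Re w1 * Im w1" unfolding w1_def by (rule csqrt_Im)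
  have nw1: "norm w1 = sqrt (cmod z1)" unfolding w1_def by simp
  have "\<bar>Im z1\<bar> = 2 * Re w1 * \<bar>Im w1\<bar>" using im r1 by (simp add: abs_mult)
  also have "\<dots> \<le> 2 * Re w1 * norm w1" using r1 abs_Im_le_cmod[of w1] by simp
  also have "\<dots> \<le> 2 * Re w1 * sqrt K" using r1 assms(2) nw1 by simp
  finally have lb: "\<bar>Im z1\<bar> \<le> 2 * Re w1 * sqrt K" .
  have "(w1 - w2) * (w1 + w2) = z1 - z2" using e1 e2 by (simp add: algebra_simps power2_eq_square)
  hence nn: "cmod (w1 - w2) * cmod (w1 + w2) = cmod (z1 - z2)" by (metis norm_mult)
  have "Re w1 \<le> cmod (w1 + w2)"
  proof -
    have "Re w1 \<le> Re (w1 + w2)" using r2 by simp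
    also have "\<dots> \<le> cmod (w1 + w2)" by (rule complex_Re_le_cmod)
    finally show ?thesis .
  qed
  hence "cmod (w1 - w2) * Re w1 \<le> cmod (z1 - z2)" using nn by (metis mult_left_mono norm_ge_zero)
  moreover have "sqrt K \<ge> 0"
  proof -
    have "0 \<le> K" using assms(2) norm_ge_zero[of z1] by linarith
    thus ?thesis by simp
  qed
  ultimately have "(2 * sqrt K) * (cmod (w1 - w2) * Re w1) \<le> (2 * sqrt K) * cmod (z1 - z2)"
    by (intro mult_left_mono) auto
  hence "cmod (w1 - w2) * (2 * Re w1 * sqrt K) \<le> 2 * sqrt K * cmod (z1 - z2)"
    by (simp add: algebra_simps)
  hence "cmod (w1 - w2) * \<bar>Im z1\<bar> \<le> 2 * sqrt K * cmod (z1 - z2)"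
    using lb by (meson mult_left_mono norm_ge_zero order_trans)
  hence "cmod (w1 - w2) \<le> 2 * sqrt K * cmod (z1 - z2) / \<bar>Im z1\<bar>"
    using assms(1) by (simp add: field_simps)
  thus ?thesis unfolding w1_def w2_def by simp
qed




lemma J0_has_integral: "(J0 has_integral pi) {0<..<1}"
proof -
  have "(J0 has_integral (arcsin (2 * 1 - 1) - arcsin (2 * 0 - 1))) {0..1}"
  proof (rule fundamental_theorem_of_calculus_interior)
    show "continuous_on {0..1} (\<lambda>s::real. arcsin (2 * s - 1))"
      by (intro continuous_intros) auto
    fix x :: real assume x: "x \<in> {0<..<1}"
    have d: "((\<lambda>s. arcsin (2 * s - 1)) has_real_derivative (inverse (sqrt (1 - (2 * x - 1)\<^sup>2)) * 2)) (at x)"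
      using x by (intro DERIV_chain2[OF DERIV_arcsin] derivative_eq_intros) auto
    have "1 - (2 * x - 1)^2 = 4 * (x * (1 - x))" by (simp add: power2_eq_square algebra_simps)
    hence "sqrt (1 - (2 * x - 1)^2) = 2 * sqrt (x * (1 - x))" by (simp add: real_sqrt_mult)
    hence "inverse (sqrt (1 - (2 * x - 1)\<^sup>2)) * 2 = J0 x" unfolding J0_def
      using x by (simp add: field_simps)
    thus "((\<lambda>s. arcsin (2 * s - 1)) has_vector_derivative J0 x) (at x)"
      using d by (simp add: has_real_derivative_iff_has_vector_derivative)
  qed simp
  thus ?thesis by (simp add: has_integral_Icc_iff_Ioo)
qed

lemma J0_integrable: "J0 integrable_on {0<..<1}"
  using J0_has_integral by blast

lemma J0_integral: "integral {0<..<1} J0 = pi"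
  using J0_has_integral by blast

lemma J0_nonneg: "J0 s \<ge> 0 \<or> s \<notin> {0<..<1}"
  unfolding J0_def by auto

lemma Ioo_lebesgue: "{0<..<(1::real)} \<in> sets lebesgue" by simp

lemma QQ_integrable:
  assumes "Im \<alpha> \<noteq> 0" "Im \<gamma> \<noteq> 0"
  shows "QQ \<alpha> \<gamma> integrable_on {0<..<1}"
proof (rule measurable_bounded_by_integrable_imp_integrable)
  show "QQ \<alpha> \<gamma> \<in> borel_measurable (lebesgue_on {0<..<1})"
    by (rule continuous_imp_measurable_on_sets_lebesgue[OF QQ_cont[OF assms] Ioo_lebesgue])
  show "(\<lambda>s. of_real (sqrt (cmod \<gamma> + 1) / sqrt \<bar>Im \<alpha>\<bar>) * J0 s) integrable_on {0<..<1}"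
    by (rule integrable_on_cmult_left[OF J0_integrable])
  show "norm (QQ \<alpha> \<gamma> s) \<le> of_real (sqrt (cmod \<gamma> + 1) / sqrt \<bar>Im \<alpha>\<bar>) * J0 s" if "s \<in> {0<..<1}" for s
    using QQ_bound[OF assms(1), of s \<gamma>] that by simp
qed (rule Ioo_lebesgue)

definition ImF :: "complex \<Rightarrow> complex \<Rightarrow> real" where
  "ImF \<alpha> \<gamma> = integral {0<..<1} (\<lambda>s. Im (QQ \<alpha> \<gamma> s))"

lemma ImQQ_has_integral:
  assumes "Im \<alpha> \<noteq> 0" "Im \<gamma> \<noteq> 0"
  shows "((\<lambda>s. Im (QQ \<alpha> \<gamma> s)) has_integral Im (integral {0<..<1} (QQ \<alpha> \<gamma>))) {0<..<1}"
proof -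
  have "(QQ \<alpha> \<gamma> has_integral integral {0<..<1} (QQ \<alpha> \<gamma>)) {0<..<1}"
    using QQ_integrable[OF assms] by blast
  from has_integral_linear[OF this bounded_linear_Im] show ?thesis by (simp add: o_def)
qed

lemma ImF_eq:
  assumes "Im \<alpha> \<noteq> 0" "Im \<gamma> \<noteq> 0"
  shows "ImF \<alpha> \<gamma> = Im (integral {0<..<1} (QQ \<alpha> \<gamma>))"
  unfolding ImF_def using ImQQ_has_integral[OF assms] by blast

lemma ImQQ_integrable:
  assumes "Im \<alpha> \<noteq> 0" "Im \<gamma> \<noteq> 0"
  shows "(\<lambda>s. Im (QQ \<alpha> \<gamma> s)) integrable_on {0<..<1}"
  using ImQQ_has_integral[OF assms] by blast

lemma ImQQ_cont:
  assumes "Im \<alpha> \<noteq> 0" "Im \<gamma> \<noteq> 0"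
  shows "continuous_on {0<..<1} (\<lambda>s. Im (QQ \<alpha> \<gamma> s))"
  using QQ_cont[OF assms] by (intro continuous_intros)

lemma pos_integral:
  fixes f :: "real \<Rightarrow> real"
  assumes "f integrable_on {0<..<1}" "continuous_on {0<..<1} f" "\<And>s. s \<in> {0<..<1} \<Longrightarrow> 0 < f s"
  shows "integral {0<..<1} f > 0"
proof -
  have sub: "{1/4..3/4::real} \<subseteq> {0<..<(1::real)}" by auto
  have c: "continuous_on {1/4..3/4} f" using continuous_on_subset[OF assms(2) sub] .
  have "integral {1/4..3/4::real} (\<lambda>s. 0::real) < integral {1/4..3/4} f"
    by (rule integral_less_real) (use c assms(3) sub in auto)
  hence "0 < integral {1/4..3/4} f" by simp
  also have "integral {1/4..3/4} f \<le> integral {0<..<1} f"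
    by (rule integral_subset_le[OF sub integrable_continuous_real[OF c] assms(1)])
       (use assms(3) in \<open>auto intro: less_imp_le\<close>)
  finally show ?thesis .
qed

lemma QQ_diff_norm:
  assumes "Im \<alpha> \<noteq> 0" "0 < s" "s < 1"
  shows "norm (QQ \<alpha> \<gamma>1 s - QQ \<alpha> \<gamma>2 s)
     = cmod (csqrt (\<gamma>1 - of_real s) - csqrt (\<gamma>2 - of_real s)) / (sqrt (cmod (\<alpha> - of_real s)) * sqrt (s * (1 - s)))"
proof -
  define w1 where "w1 = csqrt (\<gamma>1 - of_real s)"
  define v1 where "v1 = csqrt (\<gamma>2 - of_real s)"
  define w2 where "w2 = csqrt (\<alpha> - of_real s)"
  have e2: "w2^2 = \<alpha> - of_real s" unfolding w2_def by simp
  have "\<alpha> - of_real s \<noteq> 0" using assms(1) by (auto simp: complex_eq_iff)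
  hence nz: "w2 \<noteq> 0" using e2 by auto
  have "QQ \<alpha> \<gamma>1 s - QQ \<alpha> \<gamma>2 s = of_real (1 / (cmod (w2^2) * sqrt (s * (1 - s)))) * ((w1 - v1) * cnj w2)"
    unfolding QQ_def rho_def e2 w1_def[symmetric] w2_def[symmetric] v1_def[symmetric]
    by (simp only: left_diff_distrib right_diff_distrib)
  hence "norm (QQ \<alpha> \<gamma>1 s - QQ \<alpha> \<gamma>2 s) = norm (w1 - v1) / (norm w2 * sqrt (s * (1 - s)))"
    using QQ_norm_alg[OF nz assms(2,3)] by simp
  thus ?thesis unfolding w1_def w2_def v1_def norm_csqrt .
qed

lemma QQ_lip:
  assumes "Im \<alpha> \<noteq> 0" "0 < s" "s < 1" "Im \<gamma>1 \<noteq> 0" "cmod \<gamma>1 + 1 \<le> K"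
  shows "norm (QQ \<alpha> \<gamma>1 s - QQ \<alpha> \<gamma>2 s) \<le> (2 * sqrt K / \<bar>Im \<gamma>1\<bar> * cmod (\<gamma>1 - \<gamma>2) / sqrt \<bar>Im \<alpha>\<bar>) * J0 s"
proof -
  have k: "cmod (\<gamma>1 - of_real s) \<le> K"
  proof -
    have "cmod (\<gamma>1 - of_real s) \<le> cmod \<gamma>1 + cmod (of_real s :: complex)" by (rule norm_triangle_ineq4)
    also have "\<dots> \<le> cmod \<gamma>1 + 1" using assms by simp
    finally show ?thesis using assms(5) by simp
  qed
  have l: "cmod (csqrt (\<gamma>1 - of_real s) - csqrt (\<gamma>2 - of_real s)) \<le> 2 * sqrt K / \<bar>Im \<gamma>1\<bar> * cmod (\<gamma>1 - \<gamma>2)"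
    using csqrt_lip[of "\<gamma>1 - of_real s" K "\<gamma>2 - of_real s"] assms(4) k by simp
  have b: "sqrt \<bar>Im \<alpha>\<bar> \<le> sqrt (cmod (\<alpha> - of_real s))"
    using abs_Im_le_cmod[of "\<alpha> - of_real s"] by simp
  have bp: "sqrt \<bar>Im \<alpha>\<bar> > 0" using assms(1) by simp
  have sp: "sqrt (s * (1 - s)) > 0" using assms by simp
  have "cmod (csqrt (\<gamma>1 - of_real s) - csqrt (\<gamma>2 - of_real s)) / (sqrt (cmod (\<alpha> - of_real s)) * sqrt (s * (1 - s)))
      \<le> (2 * sqrt K / \<bar>Im \<gamma>1\<bar> * cmod (\<gamma>1 - \<gamma>2)) / (sqrt \<bar>Im \<alpha>\<bar> * sqrt (s * (1 - s)))"
  proof -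
    have "K \<ge> 0" using assms(5) norm_ge_zero[of \<gamma>1] by linarith
    hence "sqrt K * cmod (\<gamma>1 - \<gamma>2) \<ge> 0" by simp
    thus ?thesis using l b bp sp by (intro frac_le mult_pos_pos mult_right_mono) auto
  qed
  thus ?thesis unfolding QQ_diff_norm[OF assms(1-3)] J0_def by simp
qed




lemma int_cmul_real: "(f::real\<Rightarrow>real) integrable_on S \<Longrightarrow> (\<lambda>x. c * f x) integrable_on S"
  using integrable_cmul[of f S c] by simp

lemma integral_cmul_real: "integral S (\<lambda>x. c * (f::real\<Rightarrow>real) x) = c * integral S f"
  using integral_cmul[of S c f] by simp

definition Phi :: "complex \<Rightarrow> real \<Rightarrow> real \<Rightarrow> real" where
  "Phi \<alpha> \<mu> x = Im \<alpha> * ImF \<alpha> (of_real \<mu> * \<alpha> + of_real x)"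

lemma gam_Im: "Im (of_real \<mu> * \<alpha> + of_real x) = \<mu> * Im \<alpha>" by simp

lemma gam_Im_ne: "Im \<alpha> \<noteq> 0 \<Longrightarrow> 0 < \<mu> \<Longrightarrow> Im (of_real \<mu> * \<alpha> + of_real x) \<noteq> 0" by simp

lemma gam_Im_pos: "Im \<alpha> \<noteq> 0 \<Longrightarrow> 0 < \<mu> \<Longrightarrow> Im (of_real \<mu> * \<alpha> + of_real x) * Im \<alpha> > 0"
proof -
  assume a: "Im \<alpha> \<noteq> 0" "0 < \<mu>"
  have "Im \<alpha> * Im \<alpha> > 0" using a(1) not_real_square_gt_zero by blast
  hence "\<mu> * (Im \<alpha> * Im \<alpha>) > 0" using a(2) by simp
  thus ?thesis by (simp add: algebra_simps)
qed

lemma Phi_diff: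
  assumes "Im \<alpha> \<noteq> 0" "0 < \<mu>"
  shows "Phi \<alpha> \<mu> x1 - Phi \<alpha> \<mu> x2 = integral {0<..<1}
     (\<lambda>s. Im \<alpha> * Im (QQ \<alpha> (of_real \<mu> * \<alpha> + of_real x1) s) - Im \<alpha> * Im (QQ \<alpha> (of_real \<mu> * \<alpha> + of_real x2) s))"
proof -
  have i1: "(\<lambda>s. Im (QQ \<alpha> (of_real \<mu> * \<alpha> + of_real x1) s)) integrable_on {0<..<1}"
    using ImQQ_integrable[OF assms(1) gam_Im_ne[OF assms]] .
  have i2: "(\<lambda>s. Im (QQ \<alpha> (of_real \<mu> * \<alpha> + of_real x2) s)) integrable_on {0<..<1}"
    using ImQQ_integrable[OF assms(1) gam_Im_ne[OF assms]] .
  show ?thesis unfolding Phi_def ImF_def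
    using i1 i2 by (simp add: integral_diff int_cmul_real integral_cmul_real)
qed

lemma Phi_strict_mono:
  assumes "Im \<alpha> \<noteq> 0" "0 < \<mu>" "x1 < x2"
  shows "Phi \<alpha> \<mu> x2 < Phi \<alpha> \<mu> x1"
proof -
  let ?g1 = "of_real \<mu> * \<alpha> + of_real x1"
  let ?g2 = "of_real \<mu> * \<alpha> + of_real x2"
  have "0 < integral {0<..<1} (\<lambda>s. Im \<alpha> * Im (QQ \<alpha> ?g1 s) - Im \<alpha> * Im (QQ \<alpha> ?g2 s))"
  proof (rule pos_integral)
    show "(\<lambda>s. Im \<alpha> * Im (QQ \<alpha> ?g1 s) - Im \<alpha> * Im (QQ \<alpha> ?g2 s)) integrable_on {0<..<1}"
      using ImQQ_integrable[OF assms(1) gam_Im_ne[OF assms(1,2)]]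
      by (intro integrable_diff int_cmul_real)
    show "continuous_on {0<..<1} (\<lambda>s. Im \<alpha> * Im (QQ \<alpha> ?g1 s) - Im \<alpha> * Im (QQ \<alpha> ?g2 s))"
      using ImQQ_cont[OF assms(1) gam_Im_ne[OF assms(1,2)]]
      by (intro continuous_on_diff continuous_on_mult_left) auto
    fix s :: real assume "s \<in> {0<..<1}"
    hence s: "0 < s" "s < 1" by auto
    have "Im \<alpha> * Im (QQ \<alpha> ?g2 s) < Im \<alpha> * Im (QQ \<alpha> ?g1 s)"
      by (rule QQ_mono[OF assms(1) s]) (use gam_Im_pos[OF assms(1,2)] assms(3) in auto)
    thus "0 < Im \<alpha> * Im (QQ \<alpha> ?g1 s) - Im \<alpha> * Im (QQ \<alpha> ?g2 s)" by simp
  qed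
  thus ?thesis using Phi_diff[OF assms(1,2), of x1 x2] by simp
qed

lemma Phi_left:
  assumes "Im \<alpha> \<noteq> 0" "0 < \<mu>" "\<mu> < 1"
  shows "Phi \<alpha> \<mu> 0 > 0"
proof -
  have "0 < integral {0<..<1} (\<lambda>s. Im \<alpha> * Im (QQ \<alpha> (of_real \<mu> * \<alpha>) s))"
  proof (rule pos_integral)
    have ne: "Im (of_real \<mu> * \<alpha>) \<noteq> 0" using assms by simp
    show "(\<lambda>s. Im \<alpha> * Im (QQ \<alpha> (of_real \<mu> * \<alpha>) s)) integrable_on {0<..<1}"
      using ImQQ_integrable[OF assms(1) ne] by (intro int_cmul_real)
    show "continuous_on {0<..<1} (\<lambda>s. Im \<alpha> * Im (QQ \<alpha> (of_real \<mu> * \<alpha>) s))"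
      using ImQQ_cont[OF assms(1) ne] by (intro continuous_on_minus continuous_on_mult_left)
    fix s :: real assume "s \<in> {0<..<1}"
    thus "0 < Im \<alpha> * Im (QQ \<alpha> (of_real \<mu> * \<alpha>) s)" using QQ_left[OF assms(1) _ _ assms(2,3)] by auto
  qed
  thus ?thesis unfolding Phi_def ImF_def by (simp add: integral_cmul_real)
qed

lemma Phi_right:
  assumes "Im \<alpha> \<noteq> 0" "0 < \<mu>" "\<mu> < 1"
  shows "Phi \<alpha> \<mu> (1 - \<mu>) < 0"
proof -
  have "0 < integral {0<..<1} (\<lambda>s. - (Im \<alpha> * Im (QQ \<alpha> (of_real \<mu> * \<alpha> + of_real (1 - \<mu>)) s)))"
  proof (rule pos_integral)
    have ne: "Im (of_real \<mu> * \<alpha> + of_real (1 - \<mu>)) \<noteq> 0" using assms by simp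
    show "(\<lambda>s. - (Im \<alpha> * Im (QQ \<alpha> (of_real \<mu> * \<alpha> + of_real (1 - \<mu>)) s))) integrable_on {0<..<1}"
      using ImQQ_integrable[OF assms(1) ne] by (intro integrable_neg int_cmul_real)
    show "continuous_on {0<..<1} (\<lambda>s. - (Im \<alpha> * Im (QQ \<alpha> (of_real \<mu> * \<alpha> + of_real (1 - \<mu>)) s)))"
      using ImQQ_cont[OF assms(1) ne] by (intro continuous_on_minus continuous_on_mult_left)
    fix s :: real assume "s \<in> {0<..<1}"
    thus "0 < - (Im \<alpha> * Im (QQ \<alpha> (of_real \<mu> * \<alpha> + of_real (1 - \<mu>)) s))"
      using QQ_right[OF assms(1) _ _ assms(2,3)] by auto
  qed
  thus ?thesis unfolding Phi_def ImF_def by (simp add: integral_cmul_real)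
qed




lemma Phi_cont:
  assumes "Im \<alpha> \<noteq> 0" "0 < \<mu>" "\<mu> < 1"
  shows "continuous_on {0..1-\<mu>} (Phi \<alpha> \<mu>)"
proof (rule lipschitz_on_continuous_on)
  define K where "K = cmod \<alpha> + 2"
  define L where "L = \<bar>Im \<alpha>\<bar> * (2 * sqrt K / \<bar>\<mu> * Im \<alpha>\<bar> / sqrt \<bar>Im \<alpha>\<bar>) * pi"
  show "L-lipschitz_on {0..1-\<mu>} (Phi \<alpha> \<mu>)"
  proof (rule lipschitz_onI)
    show "0 \<le> L" unfolding L_def K_def by simp
    fix x1 x2 assume x1: "x1 \<in> {0..1-\<mu>}" and x2: "x2 \<in> {0..1-\<mu>}"
    let ?g1 = "of_real \<mu> * \<alpha> + of_real x1"
    let ?g2 = "of_real \<mu> * \<alpha> + of_real x2"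
    define C where "C = \<bar>Im \<alpha>\<bar> * (2 * sqrt K / \<bar>Im ?g1\<bar> * cmod (?g1 - ?g2) / sqrt \<bar>Im \<alpha>\<bar>)"
    have ne: "\<And>x. Im (of_real \<mu> * \<alpha> + of_real x) \<noteq> 0" using gam_Im_ne[OF assms(1,2)] .
    have kk: "cmod ?g1 + 1 \<le> K"
    proof -
      have "cmod ?g1 \<le> cmod (of_real \<mu> * \<alpha>) + cmod (of_real x1 :: complex)" by (rule norm_triangle_ineq)
      also have "\<dots> = \<mu> * cmod \<alpha> + x1" using x1 assms by (simp add: norm_mult)
      also have "\<dots> \<le> cmod \<alpha> + 1"
      proof -
        have "\<mu> * cmod \<alpha> \<le> 1 * cmod \<alpha>" using assms by (intro mult_right_mono) auto
        thus ?thesis using x1 assms by simp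
      qed
      finally show ?thesis unfolding K_def by simp
    qed
    have "dist (Phi \<alpha> \<mu> x1) (Phi \<alpha> \<mu> x2) = norm (integral {0<..<1}
     (\<lambda>s. Im \<alpha> * Im (QQ \<alpha> ?g1 s) - Im \<alpha> * Im (QQ \<alpha> ?g2 s)))"
      unfolding dist_real_def Phi_diff[OF assms(1,2)] by simp
    also have "\<dots> \<le> integral {0<..<1} (\<lambda>s. C * J0 s)"
    proof (rule integral_norm_bound_integral)
      show "(\<lambda>s. Im \<alpha> * Im (QQ \<alpha> ?g1 s) - Im \<alpha> * Im (QQ \<alpha> ?g2 s)) integrable_on {0<..<1}"
        using ImQQ_integrable[OF assms(1) ne] by (intro integrable_diff int_cmul_real)
      show "(\<lambda>s. C * J0 s) integrable_on {0<..<1}" by (rule int_cmul_real[OF J0_integrable])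
      fix s :: real assume "s \<in> {0<..<1}"
      hence s: "0 < s" "s < 1" by auto
      have "norm (Im \<alpha> * Im (QQ \<alpha> ?g1 s) - Im \<alpha> * Im (QQ \<alpha> ?g2 s))
          = \<bar>Im \<alpha>\<bar> * \<bar>Im (QQ \<alpha> ?g1 s - QQ \<alpha> ?g2 s)\<bar>"
        by (simp add: abs_mult right_diff_distrib[symmetric])
      also have "\<dots> \<le> \<bar>Im \<alpha>\<bar> * norm (QQ \<alpha> ?g1 s - QQ \<alpha> ?g2 s)"
        by (intro mult_left_mono abs_Im_le_cmod) simp
      also have "\<dots> \<le> \<bar>Im \<alpha>\<bar> * ((2 * sqrt K / \<bar>Im ?g1\<bar> * cmod (?g1 - ?g2) / sqrt \<bar>Im \<alpha>\<bar>) * J0 s)"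
        by (intro mult_left_mono QQ_lip[OF assms(1) s ne kk]) simp
      also have "\<dots> = C * J0 s" unfolding C_def by simp
      finally show "norm (Im \<alpha> * Im (QQ \<alpha> ?g1 s) - Im \<alpha> * Im (QQ \<alpha> ?g2 s)) \<le> C * J0 s" .
    qed
    also have "\<dots> = C * pi" using integral_cmul_real[of _ C J0] J0_integral by simp
    also have "\<dots> = L * dist x1 x2"
    proof -
      have "cmod (?g1 - ?g2) = \<bar>x1 - x2\<bar>" by (simp flip: of_real_diff)
      thus ?thesis unfolding C_def L_def dist_real_def by simp
    qed
    finally show "dist (Phi \<alpha> \<mu> x1) (Phi \<alpha> \<mu> x2) \<le> L * dist x1 x2" .
  qed
qed

lemma Phi_root:
  assumes "Im \<alpha> \<noteq> 0" "0 < \<mu>" "\<mu> < 1"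
  shows "\<exists>x. 0 \<le> x \<and> x \<le> 1 - \<mu> \<and> Phi \<alpha> \<mu> x = 0"
  by (rule IVT2') (use Phi_left[OF assms] Phi_right[OF assms] Phi_cont[OF assms] assms in auto)




definition Pseg :: "complex \<Rightarrow> complex \<Rightarrow> complex \<Rightarrow> complex \<Rightarrow> bool" where
  "Pseg p q r c \<longleftrightarrow> (\<exists>g I. continuous_on {0<..<1} g \<and>
     (\<forall>s\<in>{0<..<1::real}. (g s)\<^sup>2 = (c - (q + of_real s * (r - q))) /
        (((q + of_real s * (r - q)) - p) * ((q + of_real s * (r - q)) - q) * ((q + of_real s * (r - q)) - r))) \<and>
     ((\<lambda>s. g s * (r - q)) has_integral I) {0..1} \<and> I \<in> \<real>)"

lemma radicand_eq:
  assumes "r \<noteq> q" "p = q + (r - q) * \<alpha>" "c = q + (r - q) * \<gamma>" "0 < s" "s < 1" "Im \<alpha> \<noteq> 0"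
  shows "(c - (q + of_real s * (r - q))) /
        (((q + of_real s * (r - q)) - p) * ((q + of_real s * (r - q)) - q) * ((q + of_real s * (r - q)) - r))
     = (QQ \<alpha> \<gamma> s / (r - q))^2"
proof -
  have a: "\<alpha> - of_real s \<noteq> 0" using assms(6) by (auto simp: complex_eq_iff)
  have s0: "(of_real s :: complex) \<noteq> 0" "1 - (of_real s :: complex) \<noteq> 0" using assms(4,5) by auto
  have d: "r - q \<noteq> 0" using assms(1) by simp
  have "(QQ \<alpha> \<gamma> s / (r - q))^2 = (\<gamma> - of_real s) / ((\<alpha> - of_real s) * (of_real s * (1 - of_real s))) / (r - q)^2"
    using QQ_sq[OF assms(6,4,5)] by (simp add: power_divide)
  also have "\<dots> = (c - (q + of_real s * (r - q))) /
        (((q + of_real s * (r - q)) - p) * ((q + of_real s * (r - q)) - q) * ((q + of_real s * (r - q)) - r))"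
  proof -
    define D where "D = r - q"
    define S where "S = (of_real s :: complex)"
    have f1: "c - (q + of_real s * (r - q)) = D * (\<gamma> - S)" unfolding assms(3) D_def S_def by (simp add: algebra_simps)
    have f2: "(q + of_real s * (r - q)) - p = D * (S - \<alpha>)" unfolding assms(2) D_def S_def by (simp add: algebra_simps)
    have f3: "(q + of_real s * (r - q)) - q = D * S" unfolding D_def S_def by (simp add: algebra_simps)
    have f4: "(q + of_real s * (r - q)) - r = D * (S - 1)" unfolding D_def S_def by (simp add: algebra_simps)
    have nz: "D \<noteq> 0" "S \<noteq> 0" "S - \<alpha> \<noteq> 0" "S - 1 \<noteq> 0" "\<alpha> - S \<noteq> 0" "1 - S \<noteq> 0"
      using a s0 d unfolding D_def S_def by auto
    have "(\<gamma> - S) / ((\<alpha> - S) * (S * (1 - S))) / D^2 = D * (\<gamma> - S) / (D * (S - \<alpha>) * (D * S) * (D * (S - 1)))"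
    proof -
      have den: "D * (S - \<alpha>) * (D * S) * (D * (S - 1)) = D * (D^2 * ((\<alpha> - S) * (S * (1 - S))))"
        by (simp add: algebra_simps power2_eq_square)
      have "D * (\<gamma> - S) / (D * (S - \<alpha>) * (D * S) * (D * (S - 1))) = (\<gamma> - S) / (D^2 * ((\<alpha> - S) * (S * (1 - S))))"
        unfolding den using nz(1) by (rule mult_divide_mult_cancel_left)
      thus ?thesis by (simp add: divide_divide_eq_left mult.commute)
    qed
    thus ?thesis unfolding f1 f2 f3 f4 unfolding D_def S_def .
  qed
  finally show ?thesis by simp
qed

lemma seg_iff:
  assumes "r \<noteq> q" "p = q + (r - q) * \<alpha>" "c = q + (r - q) * \<gamma>" "Im \<alpha> \<noteq> 0" "Im \<gamma> \<noteq> 0"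
  shows "Pseg p q r c \<longleftrightarrow> ImF \<alpha> \<gamma> = 0"
proof
  have d: "r - q \<noteq> 0" using assms(1) by simp
  define FQ where "FQ = integral {0<..<1} (QQ \<alpha> \<gamma>)"
  have hF: "(QQ \<alpha> \<gamma> has_integral FQ) {0<..<1}" unfolding FQ_def using QQ_integrable[OF assms(4,5)] by blast
  have ImFQ: "ImF \<alpha> \<gamma> = Im FQ" unfolding FQ_def by (rule ImF_eq[OF assms(4,5)])
  {
    assume "ImF \<alpha> \<gamma> = 0"
    hence r: "FQ \<in> \<real>" using ImFQ by (simp add: complex_is_Real_iff)
    define g where "g = (\<lambda>s. QQ \<alpha> \<gamma> s / (r - q))"
    have "continuous_on {0<..<1} g" unfolding g_def using QQ_cont[OF assms(4,5)] d
      by (intro continuous_on_divide continuous_on_const) auto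
    moreover have "\<forall>s\<in>{0<..<1::real}. (g s)\<^sup>2 = (c - (q + of_real s * (r - q))) /
        (((q + of_real s * (r - q)) - p) * ((q + of_real s * (r - q)) - q) * ((q + of_real s * (r - q)) - r))"
      unfolding g_def using radicand_eq[OF assms(1-3) _ _ assms(4)] by auto
    moreover have "((\<lambda>s. g s * (r - q)) has_integral FQ) {0..1}"
      unfolding g_def using hF d by (simp add: has_integral_Icc_iff_Ioo)
    ultimately show "Pseg p q r c" unfolding Pseg_def using r by blast
  }
  assume "Pseg p q r c"
  then obtain g I where gc: "continuous_on {0<..<1} g"
    and gs: "\<forall>s\<in>{0<..<1::real}. (g s)\<^sup>2 = (c - (q + of_real s * (r - q))) /
        (((q + of_real s * (r - q)) - p) * ((q + of_real s * (r - q)) - q) * ((q + of_real s * (r - q)) - r))"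
    and gI: "((\<lambda>s. g s * (r - q)) has_integral I) {0..1}" and IR: "I \<in> \<real>"
    unfolding Pseg_def by blast
  define G where "G = (\<lambda>s. QQ \<alpha> \<gamma> s / (r - q))"
  have Gnz: "G s \<noteq> 0" if "s \<in> {0<..<1}" for s
    unfolding G_def using QQ_nonzero[OF assms(4,5)] that d by auto
  have Gc: "continuous_on {0<..<1} G" unfolding G_def using QQ_cont[OF assms(4,5)] d
    by (intro continuous_on_divide continuous_on_const) auto
  define k where "k = (\<lambda>s. g s / G s)"
  have kc: "continuous_on {0<..<1} k" unfolding k_def using gc Gc Gnz
    by (intro continuous_on_divide) auto
  have k2: "k s \<in> {1, -1}" if "s \<in> {0<..<1}" for s
  proof -
    have "(g s)^2 = (G s)^2" using gs radicand_eq[OF assms(1-3) _ _ assms(4)] that unfolding G_def by auto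
    hence "(k s)^2 = 1" unfolding k_def using Gnz[OF that] by (simp add: power_divide)
    thus ?thesis by (simp add: power2_eq_1_iff)
  qed
  have "k constant_on {0<..<1}"
  proof (rule continuous_finite_range_constant)
    show "connected {0<..<1::real}" by (rule convex_connected) simp
    have "k ` {0<..<1} \<subseteq> {1,-1}" using k2 by blast
    thus "finite (k ` {0<..<1})" by (rule finite_subset) simp
  qed (rule kc)
  then obtain c0 where c0: "\<And>s. s \<in> {0<..<1} \<Longrightarrow> k s = c0" unfolding constant_on_def by blast
  have h: "(1/2::real) \<in> {0<..<1}" by simp
  have c0v: "c0 \<in> {1, -1}" using c0[OF h] k2[OF h] by simp
  have eq: "g s * (r - q) = c0 * QQ \<alpha> \<gamma> s" if "s \<in> {0<..<1}" for s
  proof -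
    have "g s = c0 * G s" using c0[OF that] Gnz[OF that] unfolding k_def by (simp add: field_simps)
    thus ?thesis unfolding G_def using d by simp
  qed
  have "((\<lambda>s. g s * (r - q)) has_integral I) {0<..<1}" using gI by (simp add: has_integral_Icc_iff_Ioo)
  hence "((\<lambda>s. c0 * QQ \<alpha> \<gamma> s) has_integral I) {0<..<1}" by (rule has_integral_eq[rotated]) (rule eq)
  moreover have "((\<lambda>s. c0 * QQ \<alpha> \<gamma> s) has_integral c0 * FQ) {0<..<1}" by (rule has_integral_mult_right[OF hF])
  ultimately have "I = c0 * FQ" by (rule has_integral_unique)
  hence "Im (c0 * FQ) = 0" using IR by (simp add: complex_is_Real_iff)
  hence "Im FQ = 0" using c0v by auto
  thus "ImF \<alpha> \<gamma> = 0" using ImFQ by simp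
qed




theorem core:
  fixes p q r b :: complex
  assumes dist: "p \<noteq> q" "p \<noteq> r" "q \<noteq> r"
    and nc: "\<not> collinear {p, q, r}"
    and bi: "b \<in> interior (convex hull {p, q, r})"
  shows "\<exists>b'. b' \<in> {b + of_real s * (r - q) | s. True} \<and> Pseg p q r b'
           \<and> (\<forall>c. c \<in> {b + of_real s * (r - q) | s. True} \<and> Pseg p q r c \<longrightarrow> c = b')
           \<and> b' \<in> convex hull {p, q, r}"
proof -
  have d: "r - q \<noteq> 0" using dist by simp
  define \<alpha> where "\<alpha> = (p - q) / (r - q)"
  have pa: "p = q + (r - q) * \<alpha>" unfolding \<alpha>_def using d by simp
  have ia: "Im \<alpha> \<noteq> 0"
  proof
    assume "Im \<alpha> = 0"
    hence "\<alpha> = of_real (Re \<alpha>)" by (simp add: complex_eq_iff)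
    hence "p = Re \<alpha> *\<^sub>R r + (1 - Re \<alpha>) *\<^sub>R q" using pa by (simp add: scaleR_conv_of_real algebra_simps)
    hence "collinear {r, p, q}" unfolding collinear_3_expand by blast
    hence "collinear {p, q, r}" by (simp add: insert_commute)
    thus False using nc by simp
  qed
  have nad: "\<not> affine_dependent {p, q, r}" using nc dist collinear_3_eq_affine_dependent by blast
  have card: "card {p, q, r} = 3" using dist by simp
  obtain u where upos: "\<forall>x\<in>{p,q,r}. 0 < u x" and usum: "sum u {p,q,r} = 1"
    and ub: "(\<Sum>x\<in>{p,q,r}. u x *\<^sub>R x) = b"
    using bi unfolding interior_convex_hull_explicit_minimal[OF nad] card by auto
  have us: "u p + u q + u r = 1" using usum dist by simp
  have ub': "b = u p *\<^sub>R p + u q *\<^sub>R q + u r *\<^sub>R r" using ub dist by (simp add: add.assoc)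
  define \<mu> where "\<mu> = u p"
  have mu: "0 < \<mu>" "\<mu> < 1" unfolding \<mu>_def using upos us by auto
  define \<gamma> where "\<gamma> = (\<lambda>x::real. of_real \<mu> * \<alpha> + of_real x)"
  define cc where "cc = (\<lambda>x. q + (r - q) * \<gamma> x)"
  have bline: "cc x = b + of_real (x - u r) * (r - q)" for x
  proof -
    have "cc x = q + of_real \<mu> * ((r - q) * \<alpha>) + of_real x * (r - q)"
      unfolding cc_def \<gamma>_def by (simp add: algebra_simps)
    also have "\<dots> = q + of_real \<mu> * (p - q) + of_real x * (r - q)" using pa by simp
    also have "\<dots> = b + of_real (x - u r) * (r - q)"
    proof -
      have uq: "u q = 1 - \<mu> - u r" using us unfolding \<mu>_def by simp
      show ?thesis unfolding ub' uq \<mu>_def[symmetric] by (simp add: scaleR_conv_of_real algebra_simps)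
    qed
    finally show ?thesis .
  qed
  have igam: "Im (\<gamma> x) \<noteq> 0" for x unfolding \<gamma>_def using gam_Im_ne[OF ia mu(1)] .
  have Pcc: "Pseg p q r (cc x) \<longleftrightarrow> Phi \<alpha> \<mu> x = 0" for x
  proof -
    have "Pseg p q r (cc x) \<longleftrightarrow> ImF \<alpha> (\<gamma> x) = 0"
      by (rule seg_iff[OF dist(3)[symmetric] pa _ ia igam]) (simp add: cc_def)
    also have "\<dots> \<longleftrightarrow> Phi \<alpha> \<mu> x = 0" unfolding Phi_def \<gamma>_def using ia by simp
    finally show ?thesis .
  qed
  obtain xs where xs: "0 \<le> xs" "xs \<le> 1 - \<mu>" "Phi \<alpha> \<mu> xs = 0" using Phi_root[OF ia mu] by blast
  show ?thesis
  proof (intro exI conjI allI impI)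
    show "cc xs \<in> {b + of_real s * (r - q) | s. True}" using bline by blast
    show "Pseg p q r (cc xs)" using Pcc xs(3) by simp
    fix c assume c: "c \<in> {b + of_real s * (r - q) | s. True} \<and> Pseg p q r c"
    then obtain s where cs: "c = b + of_real s * (r - q)" by blast
    have ce: "c = cc (s + u r)" using bline[of "s + u r"] cs by simp
    hence "Phi \<alpha> \<mu> (s + u r) = 0" using c Pcc by simp
    hence "s + u r = xs"
      using Phi_strict_mono[OF ia mu(1), of "s + u r" xs] Phi_strict_mono[OF ia mu(1), of xs "s + u r"] xs(3)
      by (cases "s + u r < xs"; cases "xs < s + u r") auto
    thus "c = cc xs" using ce by simp
  next
    have "cc xs = \<mu> *\<^sub>R p + (1 - \<mu> - xs) *\<^sub>R q + xs *\<^sub>R r"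
    proof -
      have "cc xs = q + of_real \<mu> * ((r - q) * \<alpha>) + of_real xs * (r - q)"
        unfolding cc_def \<gamma>_def by (simp add: algebra_simps)
      also have "\<dots> = q + of_real \<mu> * (p - q) + of_real xs * (r - q)" using pa by simp
      also have "\<dots> = \<mu> *\<^sub>R p + (1 - \<mu> - xs) *\<^sub>R q + xs *\<^sub>R r"
        by (simp add: scaleR_conv_of_real algebra_simps)
      finally show ?thesis .
    qed
    thus "cc xs \<in> convex hull {p, q, r}" unfolding convex_hull_3 using xs mu
      by (intro CollectI exI[of _ \<mu>] exI[of _ "1 - \<mu> - xs"] exI[of _ xs]) auto
  qed
qed




lemma main_generic:
  fixes a :: "nat \<Rightarrow> complex" and i j k :: nat and b :: complex
  assumes perm: "{a 1, a 2, a 3} = {a i, a j, a k}"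
    and prod: "\<And>t. (t - a 1) * (t - a 2) * (t - a 3) = (t - a i) * (t - a j) * (t - a k)"
    and dist: "a i \<noteq> a j" "a i \<noteq> a k" "a j \<noteq> a k"
    and nc: "\<not> collinear {a 1, a 2, a 3}"
    and bi: "b \<in> interior (convex hull {a 1, a 2, a 3})"
  shows "\<exists>b'. b' \<in> {b + of_real s * (a k - a j) | s. True} \<and> segment_integral_real a j k b'
           \<and> (\<forall>c. c \<in> {b + of_real s * (a k - a j) | s. True} \<and> segment_integral_real a j k c \<longrightarrow> c = b')
           \<and> b' \<in> convex hull {a 1, a 2, a 3}"
proof -
  have seg: "segment_integral_real a j k c \<longleftrightarrow> Pseg (a i) (a j) (a k) c" for c
    unfolding segment_integral_real_def Pseg_def radicand_def by (simp only: prod)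
  show ?thesis unfolding seg perm
    by (rule core[OF dist]) (use nc bi perm in simp_all)
qed

theorem mainTheorem12:
  fixes a :: "nat \<Rightarrow> complex" and i j k :: nat and b :: complex
  assumes "{i, j, k} = {1, 2, 3}"
    and "a 1 \<noteq> a 2" and "a 1 \<noteq> a 3" and "a 2 \<noteq> a 3"
    and "\<not> collinear {a 1, a 2, a 3}"
    and "b \<in> interior (convex hull {a 1, a 2, a 3})"
  shows "\<exists>b'. b' \<in> {b + of_real s * (a k - a j) | s. True} \<and> segment_integral_real a j k b'
           \<and> (\<forall>c. c \<in> {b + of_real s * (a k - a j) | s. True} \<and> segment_integral_real a j k c \<longrightarrow> c = b')
           \<and> b' \<in> convex hull {a 1, a 2, a 3}"
proof -
  have r: "i \<in> {1,2,3}" "j \<in> {1,2,3}" "k \<in> {1,2,3}" using assms(1) by blast+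
  have "i \<noteq> j"
  proof
    assume "i = j" hence e: "{i,k} = {1,2,3::nat}" using assms(1) by simp
    have "card {i,k} = 3" unfolding e by simp
    moreover have "card {i,k} \<le> 2" by (cases "i = k") auto
    ultimately show False by linarith
  qed
  moreover have "i \<noteq> k"
  proof
    assume "i = k" hence e: "{i,j} = {1,2,3::nat}" using assms(1) by auto
    have "card {i,j} = 3" unfolding e by simp
    moreover have "card {i,j} \<le> 2" by (cases "i = j") auto
    ultimately show False by linarith
  qed
  moreover have "j \<noteq> k"
  proof
    assume "j = k" hence e: "{i,j} = {1,2,3::nat}" using assms(1) by auto
    have "card {i,j} = 3" unfolding e by simp
    moreover have "card {i,j} \<le> 2" by (cases "i = j") auto
    ultimately show False by linarith
  qed
  ultimately have cs: "(i = 1 \<and> j = 2 \<and> k = 3) \<or> (i = 1 \<and> j = 3 \<and> k = 2) \<or> (i = 2 \<and> j = 1 \<and> k = 3) \<or>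
       (i = 2 \<and> j = 3 \<and> k = 1) \<or> (i = 3 \<and> j = 1 \<and> k = 2) \<or> (i = 3 \<and> j = 2 \<and> k = 1)"
    using r by auto
  have pr: "(t - a 1) * (t - a 2) * (t - a 3) = (t - a i) * (t - a j) * (t - a k)" for t
    using cs by (elim disjE) (simp_all add: mult_ac)
  have pe: "{a 1, a 2, a 3} = {a i, a j, a k}"
    using cs by (elim disjE) (simp_all add: insert_commute)
  have di: "a i \<noteq> a j" "a i \<noteq> a k" "a j \<noteq> a k"
    using cs assms(2-4) by (elim disjE; simp add: eq_commute)+
  show ?thesis by (rule main_generic[OF pe pr di assms(5,6)])
qed


end
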